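(* Let $p$ be a prime, let $l,n\in\mathbb{N}$, $r,s,t\in\mathbb{Z}$ with $0\leqslant s,t<p$. Then for every integer $\alpha\geqslant 2$, $$\frac1{\lfloor n/p^{\alpha-1}\rfloor!}\sum_{k\equiv r\ (\mathrm{mod}\ p^{\alpha})}\binom{pn+s}{pk+t}(-1)^{pk}\Big(\frac{k-r}{p^{\alpha-1}}\Big)^l\equiv\frac1{\lfloor n/p^{\alpha-1}\rfloor!}\sum_{k\equiv r\ (\mathrm{mod}\ p^{\alpha})}\binom nk\binom st(-1)^k\Big(\frac{k-r}{p^{\alpha-1}}\Big)^l\pmod p.$$
   Context: Sums run over all integers $k$ in the indicated residue class; $\binom{N}{j}=0$ unless $0\le j\le N$. For rationals $u,v$, $u\equiv v\pmod p$ means $\operatorname{ord}_p(u-v)\ge 1$, where $\operatorname{ord}_p$ is the $p$-adic order. *)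

theory Defs
  imports "HOL-Number_Theory.Number_Theory"
begin

definition ibinom :: "int \<Rightarrow> int \<Rightarrow> int" where
  "ibinom N j = (if 0 \<le> j \<and> j \<le> N then int (nat N choose nat j) else 0)"

text \<open>Sum of a finitely supported function over all integers k in the residue class r mod m
  (i.e. over the support of f inside the class).\<close>
definition class_sum :: "(int \<Rightarrow> rat) \<Rightarrow> int \<Rightarrow> int \<Rightarrow> rat" where
  "class_sum f r m = sum f {k. [k = r] (mod m) \<and> f k \<noteq> 0}"

text \<open>Congruence of rationals mod p: ord_p(u - v) >= 1, i.e. p divides the numerator
  of u - v in lowest terms (u = v counts, ord_p 0 = infinity).\<close>
definition qcong :: "rat \<Rightarrow> rat \<Rightarrow> int \<Rightarrow> bool" where
  "qcong u v p = (p dvd fst (quotient_of (u - v)))"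

end

theory Submission
  imports Defs "HOL-Computational_Algebra.Polynomial"
begin

definition pint :: "nat \<Rightarrow> rat \<Rightarrow> bool" where
  "pint p x \<longleftrightarrow> (\<exists>a b. b \<noteq> 0 \<and> \<not> int p dvd b \<and> x = of_int a / of_int b)"

lemma pint_of_int[simp]: "prime p \<Longrightarrow> pint p (of_int k)"
  unfolding pint_def
  by (rule exI[of _ k], rule exI[of _ 1]) (auto simp: prime_gt_1_nat)

lemma pint_of_nat[simp]: "prime p \<Longrightarrow> pint p (of_nat k)"
  using pint_of_int[of p "int k"] by simp

lemma pint_0[simp]: "prime p \<Longrightarrow> pint p 0" and pint_1[simp]: "prime p \<Longrightarrow> pint p 1"
  using pint_of_int[of p 0] pint_of_int[of p 1] by simp_all

lemma pint_add:
  assumes "prime p" "pint p x" "pint p y" shows "pint p (x + y)"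
proof -
  from assms(2) obtain a b where ab: "b \<noteq> 0" "\<not> int p dvd b" "x = of_int a / of_int b"
    unfolding pint_def by blast
  from assms(3) obtain c d where cd: "d \<noteq> 0" "\<not> int p dvd d" "y = of_int c / of_int d"
    unfolding pint_def by blast
  have pr: "prime (int p)" using assms(1) by simp
  have "\<not> int p dvd b * d" using ab cd pr by (simp add: prime_dvd_mult_iff)
  moreover have "x + y = of_int (a*d + c*b) / of_int (b*d)"
    using ab cd by (simp add: field_simps)
  ultimately show ?thesis unfolding pint_def using ab cd
    by (intro exI[of _ "a*d+c*b"] exI[of _ "b*d"]) auto
qed

lemma pint_mult:
  assumes "prime p" "pint p x" "pint p y" shows "pint p (x * y)"
proof -
  from assms(2) obtain a b where ab: "b \<noteq> 0" "\<not> int p dvd b" "x = of_int a / of_int b"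
    unfolding pint_def by blast
  from assms(3) obtain c d where cd: "d \<noteq> 0" "\<not> int p dvd d" "y = of_int c / of_int d"
    unfolding pint_def by blast
  have pr: "prime (int p)" using assms(1) by simp
  have "\<not> int p dvd b * d" using ab cd pr by (simp add: prime_dvd_mult_iff)
  moreover have "x * y = of_int (a*c) / of_int (b*d)"
    using ab cd by (simp add: field_simps)
  ultimately show ?thesis unfolding pint_def using ab cd
    by (intro exI[of _ "a*c"] exI[of _ "b*d"]) auto
qed

lemma pint_minus:
  assumes "prime p" "pint p x" shows "pint p (- x)"
  using pint_mult[OF assms(1) pint_of_int[OF assms(1), of "-1"] assms(2)] by simp

lemma pint_diff:
  assumes "prime p" "pint p x" "pint p y" shows "pint p (x - y)"
  using pint_add[OF assms(1,2) pint_minus[OF assms(1,3)]] by simp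

lemma pint_sum:
  assumes "prime p" "\<And>i. i \<in> S \<Longrightarrow> pint p (f i)" shows "pint p (sum f S)"
  using assms(2)
proof (induction S rule: infinite_finite_induct)
  case (insert x F) thus ?case using pint_add[OF assms(1)] by simp
qed (use assms in auto)

lemma pint_power:
  assumes "prime p" "pint p x" shows "pint p (x ^ n)"
  by (induction n) (use assms pint_mult in auto)

lemma pint_div:
  assumes "prime p" "pint p x" "\<not> int p dvd c" shows "pint p (x / of_int c)"
proof -
  from assms(2) obtain a b where ab: "b \<noteq> 0" "\<not> int p dvd b" "x = of_int a / of_int b"
    unfolding pint_def by blast
  have pr: "prime (int p)" using assms(1) by simp
  have c0: "c \<noteq> 0" using assms(3) by auto
  have "\<not> int p dvd b * c" using ab assms(3) pr by (simp add: prime_dvd_mult_iff)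
  moreover have "x / of_int c = of_int a / of_int (b*c)"
    using ab c0 by (simp add: field_simps)
  ultimately show ?thesis unfolding pint_def using ab c0
    by (intro exI[of _ "a"] exI[of _ "b*c"]) auto
qed

lemma qcong_of_pint:
  assumes "prime p" "pint p y" shows "int p dvd fst (quotient_of (of_nat p * y))"
proof -
  from assms(2) obtain a b where ab: "b \<noteq> 0" "\<not> int p dvd b" "y = of_int a / of_int b"
    unfolding pint_def by blast
  obtain A B where AB: "quotient_of (of_nat p * y) = (A, B)" by (cases "quotient_of (of_nat p * y)")
  have B0: "B > 0" using quotient_of_denom_pos[OF AB] .
  have "of_nat p * y = of_int A / of_int B" using quotient_of_div[OF AB] .
  hence "of_int (int p * a) / of_int b = (of_int A / of_int B :: rat)" using ab by simp
  hence "of_int (int p * a * B) = (of_int (A * b) :: rat)" using ab B0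
    by (simp add: field_simps)
  hence eq: "int p * a * B = A * b" by (simp only: of_int_eq_iff)
  have "int p dvd A * b" unfolding eq[symmetric] by simp
  hence "int p dvd A" using ab(2) assms(1) by (simp add: prime_dvd_mult_iff)
  thus ?thesis using AB by simp
qed

locale pset =
  fixes p :: nat and a :: nat
  assumes prime_p: "prime p"
begin

lemma p_gt1: "p > 1" using prime_p prime_gt_1_nat by blast
lemma p_pos: "p > 0" using p_gt1 by simp

definition R :: "rat poly set" where "R = {c. \<forall>i. pint p (coeff c i)}"

lemma R_add: "c \<in> R \<Longrightarrow> d \<in> R \<Longrightarrow> c + d \<in> R"
  unfolding R_def by (auto intro: pint_add[OF prime_p])

lemma R_mult: "c \<in> R \<Longrightarrow> d \<in> R \<Longrightarrow> c * d \<in> R"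
  unfolding R_def by (auto simp: coeff_mult intro!: pint_sum[OF prime_p] pint_mult[OF prime_p])

lemma R_const: "pint p x \<Longrightarrow> [:x:] \<in> R"
  unfolding R_def by (auto simp: coeff_pCons prime_p split: nat.splits)

lemma R_monom: "pint p x \<Longrightarrow> monom x n \<in> R"
  unfolding R_def by (auto simp: coeff_monom prime_p)

lemma R_of_nat: "of_nat k \<in> R"
  by (metis R_const of_nat_poly pint_of_nat prime_p)

lemma R_of_int: "of_int k \<in> R"
  by (metis R_const of_int_poly pint_of_int prime_p)

lemma R_one: "1 \<in> R" using R_of_nat[of 1] by simp
lemma R_zero: "0 \<in> R" using R_of_nat[of 0] by simp

lemma R_power: "c \<in> R \<Longrightarrow> c ^ n \<in> R"
  by (induction n) (auto intro: R_mult R_one)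

lemma R_uminus: "c \<in> R \<Longrightarrow> - c \<in> R"
  using R_mult[OF R_of_int[of "-1"]] by simp

lemma R_diff: "c \<in> R \<Longrightarrow> d \<in> R \<Longrightarrow> c - d \<in> R"
  using R_add R_uminus by (metis diff_conv_add_uminus)

abbreviation Q :: nat where "Q \<equiv> p ^ a"
abbreviation M :: nat where "M \<equiv> p ^ Suc a"

definition z :: "rat poly" where "z = monom 1 M - 1"
definition u :: "rat poly" where "u = monom 1 Q - 1"

lemma z_R: "z \<in> R" unfolding z_def by (intro R_diff R_monom R_one) (simp add: prime_p)
lemma u_R: "u \<in> R" unfolding u_def by (intro R_diff R_monom R_one) (simp add: prime_p)

definition gam :: "nat \<Rightarrow> rat poly" where
  "gam i = smult (1 / (of_nat (p ^ i) * fact i)) (z ^ i)"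

lemma gam_0: "gam 0 = 1" by (simp add: gam_def)

lemma gam_mult: "gam i * gam j = of_nat ((i + j) choose i) * gam (i + j)"
proof -
  have "of_nat ((i + j) choose i) = (fact (i+j) / (fact i * fact j) :: rat)"
    using binomial_fact[of i "i+j"] by simp
  hence "(1 / (of_nat (p ^ i) * fact i)) * (1 / (of_nat (p ^ j) * fact j)) =
        of_nat ((i + j) choose i) * (1 / (of_nat (p ^ (i+j)) * fact (i+j)) :: rat)"
    using p_pos by (simp add: field_simps power_add)
  thus ?thesis unfolding gam_def
    by (simp add: power_add of_nat_poly mult_ac)
qed

inductive_set A0 :: "rat poly set" where
  gen: "c \<in> R \<Longrightarrow> c * gam i \<in> A0"
| add: "x \<in> A0 \<Longrightarrow> y \<in> A0 \<Longrightarrow> x + y \<in> A0"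

lemma A0_R: "c \<in> R \<Longrightarrow> c \<in> A0"
  using A0.gen[of c 0] by (simp add: gam_0)

lemma A0_mult_R: "x \<in> A0 \<Longrightarrow> c \<in> R \<Longrightarrow> c * x \<in> A0"
proof (induction rule: A0.induct)
  case (gen d i) thus ?case using A0.gen[OF R_mult[OF gen(2,1)], of i] by (simp add: mult.assoc)
next
  case (add x y) thus ?case by (simp add: distrib_left A0.add)
qed

lemma A0_mult: "x \<in> A0 \<Longrightarrow> y \<in> A0 \<Longrightarrow> x * y \<in> A0"
proof (induction x rule: A0.induct)
  case (gen c i)
  from gen(2) show ?case
  proof (induction y rule: A0.induct)
    case (gen d j)
    have "c * gam i * (d * gam j) = (c * d * of_nat ((i + j) choose i)) * gam (i+j)"
      by (simp add: gam_mult mult_ac)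
    thus ?case using gen.prems gen.hyps
      by (metis A0.gen R_mult R_of_nat \<open>c \<in> R\<close>)
  next
    case (add x y) thus ?case by (simp add: distrib_left A0.add)
  qed
next
  case (add x y) thus ?case by (simp add: distrib_right A0.add)
qed

lemma A0_one: "1 \<in> A0" using A0_R R_one by blast
lemma A0_zero: "0 \<in> A0" using A0_R R_zero by blast
lemma A0_of_nat: "of_nat k \<in> A0" using A0_R R_of_nat by blast
lemma A0_of_int: "of_int k \<in> A0" using A0_R R_of_int by blast

lemma A0_power: "x \<in> A0 \<Longrightarrow> x ^ n \<in> A0"
  by (induction n) (auto intro: A0_mult A0_one)

lemma A0_uminus: "x \<in> A0 \<Longrightarrow> - x \<in> A0"
  using A0_mult_R[OF _ R_of_int[of "-1"]] by fastforce

lemma A0_diff: "x \<in> A0 \<Longrightarrow> y \<in> A0 \<Longrightarrow> x - y \<in> A0"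
  by (metis A0.add A0_uminus diff_conv_add_uminus)

lemma A0_sum: "(\<And>i. i \<in> S \<Longrightarrow> f i \<in> A0) \<Longrightarrow> sum f S \<in> A0"
  by (induction S rule: infinite_finite_induct) (auto intro: A0_zero A0.add)

lemma A0_smult: "x \<in> A0 \<Longrightarrow> pint p c \<Longrightarrow> smult c x \<in> A0"
  using A0_mult_R[OF _ R_const] by simp

lemma A0_gam: "gam i \<in> A0" using A0.gen[OF R_one] by simp

inductive_set J :: "rat poly set" where
  jp: "x \<in> A0 \<Longrightarrow> of_nat p * x \<in> J"
| ju: "x \<in> A0 \<Longrightarrow> u * x \<in> J"
| jg: "c \<in> R \<Longrightarrow> i \<ge> 1 \<Longrightarrow> c * gam i \<in> J"
| jadd: "x \<in> J \<Longrightarrow> y \<in> J \<Longrightarrow> x + y \<in> J"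

lemma J_A0: "x \<in> J \<Longrightarrow> x \<in> A0"
  by (induction rule: J.induct) (auto intro: A0_mult A0_of_nat A0_R u_R A0.gen A0.add)

lemma J_mult: "x \<in> J \<Longrightarrow> y \<in> A0 \<Longrightarrow> y * x \<in> J"
proof (induction x rule: J.induct)
  case (jp x) thus ?case using J.jp[OF A0_mult[OF jp(2,1)]] by (simp add: mult_ac)
next
  case (ju x) thus ?case using J.ju[OF A0_mult[OF ju(2,1)]] by (simp add: mult_ac)
next
  case (jg c i)
  from jg(3) show ?case
  proof (induction y rule: A0.induct)
    case (gen d j)
    have "d * gam j * (c * gam i) = (c * d) * (gam j * gam i)" by (simp add: mult_ac)
    also have "\<dots> = (c * d) * (of_nat ((j + i) choose j) * gam (j+i))" by (simp only: gam_mult)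
    also have "\<dots> = (c * d * of_nat ((j + i) choose j)) * gam (j+i)" by (simp add: mult_ac)
    finally have "d * gam j * (c * gam i) = (c * d * of_nat ((j + i) choose j)) * gam (j+i)" .
    moreover have "(c * d * of_nat ((j + i) choose j)) * gam (j+i) \<in> J"
      using jg gen by (intro J.jg R_mult R_of_nat) auto
    ultimately show ?case by metis
  next
    case (add x y) thus ?case by (simp add: distrib_right J.jadd)
  qed
next
  case (jadd x y) thus ?case by (simp add: distrib_left J.jadd)
qed

lemma J_zero: "0 \<in> J" using J.jp[OF A0_zero] by simp

lemma J_sum: "(\<And>i. i \<in> S \<Longrightarrow> f i \<in> J) \<Longrightarrow> sum f S \<in> J"
  by (induction S rule: infinite_finite_induct) (auto intro: J_zero J.jadd)

lemma J_uminus: "x \<in> J \<Longrightarrow> - x \<in> J"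
  using J_mult[OF _ A0_of_int[of "-1"]] by fastforce

lemma J_u: "u \<in> J" using J.ju[OF A0_one] by simp
lemma J_p: "of_nat p \<in> J" using J.jp[OF A0_one] by simp

end

function vp :: "nat \<Rightarrow> nat \<Rightarrow> nat" where
  "vp p N = (if p \<le> 1 \<or> N < p then 0 else N div p + vp p (N div p))"
  by pat_completeness auto
termination by (relation "measure (\<lambda>(p,N). N)") auto

declare vp.simps[simp del]

lemma vp_eq: "p > 1 \<Longrightarrow> vp p N = N div p + vp p (N div p)"
  by (cases "N < p") (simp_all add: vp.simps[of p N] vp.simps[of p 0])

lemma vp_0: "vp p 0 = 0" by (simp add: vp.simps)

lemma vp_lt: "p > 1 \<Longrightarrow> j \<ge> 1 \<Longrightarrow> vp p j < j"
proof (induction j rule: less_induct)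
  case (less j)
  show ?case
  proof (cases "j div p = 0")
    case True thus ?thesis using less.prems by (simp add: vp_eq[of p j] vp_0)
  next
    case False
    have lt: "j div p < j" using less.prems by simp
    have "vp p (j div p) < j div p" using less.IH[OF lt] less.prems False by simp
    moreover have "2 * (j div p) \<le> j"
    proof -
      have "p * (j div p) \<le> j" by (metis mult_div_mod_eq le_add1)
      moreover have "2 * (j div p) \<le> p * (j div p)" using less.prems by (intro mult_le_mono1) simp
      ultimately show ?thesis by linarith
    qed
    ultimately show ?thesis using less.prems by (simp add: vp_eq[of p j])
  qed
qed

lemma fact_split:
  assumes "prime p"
  shows "\<exists>c. fact N = p ^ (N div p) * fact (N div p) * c \<and> \<not> p dvd c"
proof (induction N)
  case 0 thus ?case using assms by (intro exI[of _ 1]) (auto simp: prime_gt_1_nat)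
next
  case (Suc N)
  then obtain c where c: "fact N = p ^ (N div p) * fact (N div p) * c" "\<not> p dvd c" by blast
  have p1: "p > 1" using assms prime_gt_1_nat by blast
  show ?case
  proof (cases "p dvd Suc N")
    case True
    then obtain k where k: "Suc N = p * k" by blast
    have kpos: "k \<ge> 1" using k by (cases k) auto
    have "Suc N div p = k" using k p1 by simp
    moreover have "N div p = k - 1"
    proof -
      obtain k' where k': "k = Suc k'" using kpos by (cases k) auto
      have "N = (p - 1) + k' * p" using k k' p1 by (simp add: algebra_simps)
      hence "N div p = k' + (p - 1) div p" using p1 by (metis div_mult_self1 not_one_less_zero)
      thus "N div p = k - 1" using p1 k' by simp
    qed
    ultimately have e: "Suc N div p = Suc (N div p)" using kpos by simp
    have "fact (Suc N) = Suc N * fact N" by simp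
    also have "\<dots> = p * k * (p ^ (N div p) * fact (N div p) * c)" using k c by simp
    also have "\<dots> = p ^ (Suc N div p) * fact (Suc N div p) * c"
      using e \<open>Suc N div p = k\<close> by (simp add: fact_Suc algebra_simps)
    finally show ?thesis using c by blast
  next
    case False
    hence e: "Suc N div p = N div p" by (simp add: div_Suc dvd_eq_mod_eq_0)
    have "\<not> p dvd Suc N * c" using False c(2) assms by (simp only: prime_dvd_mult_iff) simp
    moreover have "fact (Suc N) = p ^ (Suc N div p) * fact (Suc N div p) * (Suc N * c)"
      using c e by (simp add: algebra_simps)
    ultimately show ?thesis by blast
  qed
qed

lemma fact_vp:
  assumes "prime p"
  shows "\<exists>c. fact N = p ^ (vp p N) * c \<and> \<not> p dvd c"
proof (induction N rule: less_induct)
  case (less N)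
  have p1: "p > 1" using assms prime_gt_1_nat by blast
  show ?case
  proof (cases "N = 0")
    case True thus ?thesis using p1 by (intro exI[of _ 1]) (auto simp: vp_0)
  next
    case False
    hence "N div p < N" using p1 by simp
    from less.IH[OF this] obtain c1 where c1: "fact (N div p) = p ^ vp p (N div p) * c1" "\<not> p dvd c1" by blast
    obtain c2 where c2: "fact N = p ^ (N div p) * fact (N div p) * c2" "\<not> p dvd c2"
      using fact_split[OF assms] by blast
    have "fact N = p ^ vp p N * (c1 * c2)" using c1 c2 p1 by (simp add: vp_eq[of p N] power_add mult_ac)
    moreover have "\<not> p dvd c1 * c2" using c1 c2 assms by (simp add: prime_dvd_mult_iff)
    ultimately show ?thesis by blast
  qed
qed

context pset
begin

lemma frob_gen:
  fixes x y :: "'b::comm_ring_1"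
  shows "(x + y) ^ p = x ^ p + y ^ p + of_nat p * (\<Sum>k\<in>{1..<p}. of_nat ((p choose k) div p) * x ^ k * y ^ (p - k))"
proof -
  have s: "{..p} = insert p (insert 0 {1..<p})" using p_gt1 by auto
  have mid: "(\<Sum>k\<in>{1..<p}. of_nat (p choose k) * x ^ k * y ^ (p - k)) =
        of_nat p * (\<Sum>k\<in>{1..<p}. of_nat ((p choose k) div p) * x ^ k * y ^ (p - k))"
    unfolding sum_distrib_left
  proof (rule sum.cong[OF refl])
    fix k assume "k \<in> {1..<p}"
    hence "p dvd (p choose k)" using dvd_choose_prime[of k p] prime_p by auto
    hence "p choose k = p * ((p choose k) div p)" by simp
    hence "(of_nat (p choose k) :: 'b) = of_nat p * of_nat ((p choose k) div p)"
      by (metis of_nat_mult)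
    thus "of_nat (p choose k) * x ^ k * y ^ (p - k) =
          of_nat p * (of_nat ((p choose k) div p) * x ^ k * y ^ (p - k))" by (simp add: mult_ac)
  qed
  have "(x + y) ^ p = (\<Sum>k\<le>p. of_nat (p choose k) * x ^ k * y ^ (p - k))" by (rule binomial_ring)
  also have "\<dots> = x ^ p + (y ^ p + (\<Sum>k\<in>{1..<p}. of_nat (p choose k) * x ^ k * y ^ (p - k)))"
    unfolding s using p_gt1 by (simp add: sum.insert)
  finally show ?thesis using mid by (simp add: add_ac)
qed

lemma J_frob:
  assumes "x \<in> J" "y \<in> A0"
  shows "\<exists>w\<in>J. (x + y) ^ p = x ^ p + y ^ p + of_nat p * w"
proof -
  have "(\<Sum>k\<in>{1..<p}. of_nat ((p choose k) div p) * x ^ k * y ^ (p - k)) \<in> J"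
  proof (rule J_sum)
    fix k assume "k \<in> {1..<p}"
    hence xk: "x ^ k = (x ^ (k - 1)) * x" by (metis Suc_diff_1 atLeastLessThan_iff less_le_trans
        power_Suc2 zero_less_one)
    have eq: "of_nat ((p choose k) div p) * x ^ k * y ^ (p - k) =
           (of_nat ((p choose k) div p) * x ^ (k-1) * y ^ (p - k)) * x" unfolding xk by (simp only: mult_ac)
    have mem: "(of_nat ((p choose k) div p) * x ^ (k-1) * y ^ (p - k)) * x \<in> J"
      by (rule J_mult[OF assms(1)]) (intro A0_mult A0_power A0_of_nat J_A0 assms)
    show "of_nat ((p choose k) div p) * x ^ k * y ^ (p - k) \<in> J" by (subst eq) (rule mem)
  qed
  thus ?thesis using frob_gen[of x y] by blast
qed

lemma A0_frob:
  assumes "x \<in> A0" "y \<in> A0"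
  shows "\<exists>w\<in>A0. (x + y) ^ p = x ^ p + y ^ p + of_nat p * w"
proof -
  have "(\<Sum>k\<in>{1..<p}. of_nat ((p choose k) div p) * x ^ k * y ^ (p - k)) \<in> A0"
    using assms by (intro A0_sum A0_mult A0_power A0_of_nat)
  thus ?thesis using frob_gen[of x y] by blast
qed

lemma z_gam1: "z = of_nat p * gam 1"
  using p_pos by (simp add: gam_def of_nat_poly)

lemma u_pow: "\<exists>w\<in>J. u ^ p = of_nat p * w"
proof -
  obtain w where w: "w \<in> J" "(u + 1) ^ p = u ^ p + 1 ^ p + of_nat p * w"
    using J_frob[OF J_u A0_one] by blast
  have "(u + 1) ^ p = monom 1 M" unfolding u_def by (simp add: monom_power mult.commute)
  hence "u ^ p = z - of_nat p * w" using w unfolding z_def by (simp add: algebra_simps)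
  also have "\<dots> = of_nat p * (gam 1 - w)" by (simp add: z_gam1 algebra_simps)
  finally have "u ^ p = of_nat p * (gam 1 - w)" .
  moreover have "gam 1 - w \<in> J"
    using J.jg[OF R_one, of 1] w(1) J_uminus J.jadd by (metis diff_conv_add_uminus mult_1 order_refl)
  ultimately show ?thesis by blast
qed

lemma gam_pow: "\<exists>e::nat. gam i ^ k = of_nat e * gam (i * k)"
proof (induction k)
  case 0 thus ?case by (intro exI[of _ 1]) (simp add: gam_0)
next
  case (Suc k)
  then obtain e where e: "gam i ^ k = of_nat e * gam (i * k)" by blast
  have "gam i ^ Suc k = of_nat e * (gam (i * k) * gam i)" using e by (simp add: mult_ac)
  also have "\<dots> = of_nat e * (of_nat ((i * k + i) choose (i * k)) * gam (i * k + i))"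
    by (simp only: gam_mult)
  also have "\<dots> = of_nat (e * ((i * k + i) choose (i * k))) * gam (i * Suc k)"
    by (simp only: mult_Suc_right add.commute[of i] of_nat_mult mult.assoc)
  finally show ?case by blast
qed

lemma gam_pow_p:
  assumes "i \<ge> 1"
  shows "\<exists>e::nat. gam i ^ p = of_nat p * (of_nat e * gam (p * i))"
proof -
  obtain e where e: "gam i ^ (p - 1) = of_nat e * gam (i * (p - 1))" using gam_pow by blast
  have pe: "p = Suc (p - 1)" using p_pos by simp
  have "gam i ^ p = gam i ^ (p - 1) * gam i" by (subst pe) (simp add: mult.commute)
  also have "\<dots> = of_nat e * (gam (i * (p - 1)) * gam i)" using e by (simp add: mult_ac)
  also have "\<dots> = of_nat e * (of_nat ((i * (p - 1) + i) choose (i * (p - 1))) * gam (p * i))"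
    using gam_mult[of "i * (p - 1)" i] pe by (metis add.commute mult.commute mult_Suc_right)
  finally have g: "gam i ^ p = of_nat e * (of_nat ((p * i) choose (i * (p - 1))) * gam (p * i))"
    using pe by (metis add.commute mult.commute mult_Suc_right)
  have "(p * i) choose (i * (p - 1)) = (p * i) choose i"
    using pe by (subst binomial_symmetric) (auto simp: algebra_simps)
  moreover have "(p * i) choose i = p * ((p * i - 1) choose (i - 1))"
  proof -
    have "i * ((p * i) choose i) = (p * i) * ((p * i - 1) choose (i - 1))"
      using assms by (intro times_binomial_minus1_eq) simp
    thus ?thesis using assms by (simp add: mult_ac)
  qed
  ultimately have "gam i ^ p = of_nat p * (of_nat (e * ((p * i - 1) choose (i - 1))) * gam (p * i))"
    using g by (simp add: mult_ac)
  thus ?thesis by blast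
qed

lemma J_pow_p: "x \<in> J \<Longrightarrow> \<exists>w\<in>J. x ^ p = of_nat p * w"
proof (induction rule: J.induct)
  case (jp x)
  have pp: "p = Suc (Suc (p - 2))" using p_gt1 by simp
  have "(of_nat p * x) ^ p = of_nat p * (of_nat p * (of_nat (p ^ (p - 2)) * x ^ p))"
    by (subst (1 2) pp) (simp add: power_mult_distrib mult_ac)
  moreover have "of_nat p * (of_nat (p ^ (p - 2)) * x ^ p) \<in> J"
    using jp by (intro J.jp A0_mult A0_of_nat A0_power)
  ultimately show ?case by blast
next
  case (ju x)
  obtain w where w: "w \<in> J" "u ^ p = of_nat p * w" using u_pow by blast
  have "(u * x) ^ p = of_nat p * (x ^ p * w)" using w by (simp add: power_mult_distrib mult_ac)
  moreover have "x ^ p * w \<in> J" using ju w by (intro J_mult A0_power)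
  ultimately show ?case by blast
next
  case (jg c i)
  obtain e where e: "gam i ^ p = of_nat p * (of_nat e * gam (p * i))" using gam_pow_p[OF jg(2)] by blast
  have "(c * gam i) ^ p = of_nat p * ((c ^ p * of_nat e) * gam (p * i))"
    using e by (simp add: power_mult_distrib mult_ac)
  moreover have "(c ^ p * of_nat e) * gam (p * i) \<in> J"
    using jg p_pos by (intro J.jg R_mult R_power R_of_nat) auto
  ultimately show ?case by blast
next
  case (jadd x y)
  obtain w1 where w1: "w1 \<in> J" "x ^ p = of_nat p * w1" using jadd by blast
  obtain w2 where w2: "w2 \<in> J" "y ^ p = of_nat p * w2" using jadd by blast
  obtain w3 where w3: "w3 \<in> J" "(x + y) ^ p = x ^ p + y ^ p + of_nat p * w3"
    using J_frob[OF jadd(1) J_A0[OF jadd(2)]] by blast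
  have "(x + y) ^ p = of_nat p * (w1 + w2 + w3)" using w1 w2 w3 by (simp add: algebra_simps)
  moreover have "w1 + w2 + w3 \<in> J" using w1 w2 w3 by (intro J.jadd)
  ultimately show ?case by blast
qed

lemma J_pow: "w \<in> J \<Longrightarrow> \<exists>b\<in>A0. w ^ N = of_nat p ^ (vp p N) * b"
proof (induction N arbitrary: w rule: less_induct)
  case (less N)
  show ?case
  proof (cases "N = 0")
    case True thus ?thesis by (intro bexI[of _ 1]) (auto simp: vp_0 A0_one)
  next
    case False
    hence lt: "N div p < N" using p_gt1 by simp
    obtain w' where w': "w' \<in> J" "w ^ p = of_nat p * w'" using J_pow_p[OF less.prems] by blast
    obtain b where b: "b \<in> A0" "w' ^ (N div p) = of_nat p ^ vp p (N div p) * b"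
      using less.IH[OF lt w'(1)] by blast
    have "N = p * (N div p) + N mod p" by simp
    hence "w ^ N = (w ^ p) ^ (N div p) * w ^ (N mod p)"
      by (metis power_add power_mult)
    also have "\<dots> = of_nat p ^ (N div p) * w' ^ (N div p) * w ^ (N mod p)"
      using w' by (simp add: power_mult_distrib)
    also have "\<dots> = of_nat p ^ vp p N * (b * w ^ (N mod p))"
      using b p_gt1 by (simp add: vp_eq[of p N] power_add mult_ac)
    finally show ?thesis using b less.prems by (intro bexI[of _ "b * w ^ (N mod p)"]) (auto intro: A0_mult A0_power J_A0)
  qed
qed

end

lemma of_nat_pow_mult: "(of_nat n :: rat poly) ^ k * x = smult (of_nat n ^ k) x"
  by (simp add: of_nat_mult_conv_smult flip: of_nat_power)

context pset
begin

lemma A0_lin_pow: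
  assumes "x \<in> A0" "b \<in> A0"
  shows "\<exists>G\<in>A0. (x + of_nat p * b) ^ k = x ^ k + of_nat p * G"
proof (induction k)
  case 0 thus ?case using A0_zero by (intro bexI[of _ 0]) auto
next
  case (Suc k)
  then obtain G where G: "G \<in> A0" "(x + of_nat p * b) ^ k = x ^ k + of_nat p * G" by blast
  have "(x + of_nat p * b) ^ Suc k = (x ^ k + of_nat p * G) * (x + of_nat p * b)"
    using G by (simp add: power_Suc2)
  also have "\<dots> = x ^ Suc k + of_nat p * (G * x + x ^ k * b + of_nat p * G * b)"
    by (simp add: algebra_simps power_Suc2)
  finally show ?case using G assms
    by (intro bexI[of _ "G * x + x ^ k * b + of_nat p * G * b"]) (auto intro!: A0.add A0_mult A0_power A0_of_nat)
qed

lemma neg_pow_p: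
  assumes "V \<in> A0" shows "\<exists>G\<in>A0. (- V) ^ p = - (V ^ p) + of_nat p * G"
proof (cases "p = 2")
  case True
  have "(- V) ^ p = - (V ^ p) + of_nat p * V ^ p" using True by simp
  thus ?thesis using A0_power[OF assms] by blast
next
  case False
  hence "odd p" using prime_p prime_odd_nat p_gt1 by (metis le_neq_implies_less prime_ge_2_nat)
  hence "(- V) ^ p = - (V ^ p)" by (simp add: power_minus_odd)
  thus ?thesis using A0_zero by (intro bexI[of _ 0]) auto
qed

lemma one_minus_pow:
  assumes "W \<in> A0"
  shows "\<exists>G\<in>A0. (1 - W) ^ (p ^ e) = 1 - W ^ (p ^ e) + of_nat p * G"
proof (induction e)
  case 0 thus ?case using A0_zero by (intro bexI[of _ 0]) auto
next
  case (Suc e)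
  then obtain G where G: "G \<in> A0" "(1 - W) ^ (p ^ e) = 1 - W ^ (p ^ e) + of_nat p * G" by blast
  define V where "V = W ^ (p ^ e)"
  have V: "V \<in> A0" unfolding V_def using assms by (rule A0_power)
  obtain G1 where G1: "G1 \<in> A0" "(1 - V + of_nat p * G) ^ p = (1 - V) ^ p + of_nat p * G1"
    using A0_lin_pow[OF A0_diff[OF A0_one V] G(1)] by blast
  obtain G2 where G2: "G2 \<in> A0" "(1 + (- V)) ^ p = 1 ^ p + (- V) ^ p + of_nat p * G2"
    using A0_frob[OF A0_one A0_uminus[OF V]] by blast
  obtain G3 where G3: "G3 \<in> A0" "(- V) ^ p = - (V ^ p) + of_nat p * G3"
    using neg_pow_p[OF V] by blast
  have "(1 - W) ^ (p ^ Suc e) = ((1 - W) ^ (p ^ e)) ^ p" by (subst power_Suc2) (simp only: power_mult)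
  also have "\<dots> = (1 - V + of_nat p * G) ^ p" using G V_def by simp
  also have "\<dots> = 1 - V ^ p + of_nat p * (G1 + G2 + G3)"
    using G1 G2 G3 by (simp add: algebra_simps)
  also have "V ^ p = W ^ (p ^ Suc e)" unfolding V_def by (subst power_Suc2) (simp only: power_mult)
  finally show ?case using G1 G2 G3 by (intro bexI[of _ "G1 + G2 + G3"]) (auto intro: A0.add)
qed

lemma J_binom:
  assumes y: "y \<in> J" and d: "d \<in> A0"
  shows "\<exists>b\<in>A0. (y + of_nat p * d) ^ N = y ^ N + of_nat p ^ (vp p N + 1) * b"
proof -
  have "\<forall>j. \<exists>b. b \<in> A0 \<and> y ^ j = of_nat p ^ (vp p j) * b" using J_pow[OF y] by blast
  then obtain B where B: "\<And>j. B j \<in> A0" "\<And>j. y ^ j = of_nat p ^ (vp p j) * B j" by metis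
  have "\<forall>j. \<exists>c. fact j = p ^ (vp p j) * c \<and> \<not> p dvd c" using fact_vp[OF prime_p] by blast
  then obtain c where c: "\<And>j. fact j = p ^ (vp p j) * c j" "\<And>j. \<not> p dvd c j" by metis
  define rho where "rho j = (of_nat (p ^ (j - vp p j - 1) * c N) / of_int (int (c j * c (N - j))) :: rat)" for j
  have rho_pint: "pint p (rho j)" for j
  proof -
    have "\<not> int p dvd int (c j * c (N - j))" using c(2) prime_p
      by (simp only: int_dvd_int_iff prime_dvd_mult_iff) simp
    thus ?thesis unfolding rho_def
      by (intro pint_div[OF prime_p] pint_of_nat[OF prime_p])
  qed
  have trm: "of_nat (N choose j) * (of_nat p * d) ^ j * y ^ (N - j) =
      of_nat p ^ (vp p N + 1) * smult (rho j) (d ^ j * B (N - j))" if j: "j \<in> {1..N}" for j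
  proof -
    have jv: "vp p j < j" using vp_lt[OF p_gt1] j by simp
    have nat_eq: "(N choose j) * (p ^ vp p j * c j) * (p ^ vp p (N - j) * c (N - j)) = p ^ vp p N * c N"
      using binomial_fact_lemma[of j N] j c(1)[of j] c(1)[of "N-j"] c(1)[of N] by (simp add: mult_ac)
    have cpos: "c k > 0" for k using c(2)[of k] by (cases "c k") auto
    have scal: "(of_nat (N choose j) :: rat) * of_nat p ^ j * of_nat p ^ vp p (N - j) =
          of_nat p ^ (vp p N + 1) * rho j"
    proof -
      have e1: "(of_nat (N choose j) :: rat) * (of_nat p ^ vp p j * of_nat (c j)) * (of_nat p ^ vp p (N - j) * of_nat (c (N - j)))
            = of_nat p ^ vp p N * of_nat (c N)"
        using arg_cong[OF nat_eq, of "of_nat :: nat \<Rightarrow> rat"] by simp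
      define k where "k = j - vp p j - 1"
      have jeq: "j = Suc (vp p j + k)" using jv unfolding k_def by simp
      have "(of_nat p :: rat) ^ j = of_nat p ^ (Suc (vp p j + k))" using jeq by (rule arg_cong)
      also have "\<dots> = of_nat p ^ vp p j * of_nat p * of_nat p ^ k" by (simp add: power_add mult_ac)
      finally have pj: "(of_nat p :: rat) ^ j = of_nat p ^ vp p j * of_nat p * of_nat p ^ (j - vp p j - 1)"
        unfolding k_def .
      have "(of_nat (N choose j) :: rat) = of_nat p ^ vp p N * of_nat (c N) /
             ((of_nat p ^ vp p j * of_nat (c j)) * (of_nat p ^ vp p (N - j) * of_nat (c (N - j))))"
        using e1 cpos p_pos by (simp add: field_simps)
      thus ?thesis unfolding rho_def using cpos p_pos pj by (simp add: field_simps power_add)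
    qed
    have "of_nat (N choose j) * (of_nat p * d) ^ j * y ^ (N - j) =
          of_nat (N choose j) * (of_nat p ^ j * (of_nat p ^ vp p (N - j) * (d ^ j * B (N - j))))"
      using B(2)[of "N - j"] by (simp add: power_mult_distrib mult_ac)
    also have "\<dots> = smult ((of_nat (N choose j) :: rat) * of_nat p ^ j * of_nat p ^ vp p (N - j)) (d ^ j * B (N - j))"
      by (simp only: of_nat_pow_mult of_nat_mult_conv_smult smult_smult mult.assoc)
    also have "\<dots> = of_nat p ^ (vp p N + 1) * smult (rho j) (d ^ j * B (N - j))"
      unfolding scal by (simp only: of_nat_pow_mult smult_smult)
    finally show ?thesis .
  qed
  have "(y + of_nat p * d) ^ N = (of_nat p * d + y) ^ N" by (simp add: add.commute)
  also have "\<dots> = (\<Sum>j\<le>N. of_nat (N choose j) * (of_nat p * d) ^ j * y ^ (N - j))"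
    by (rule binomial_ring)
  also have "{..N} = insert 0 {1..N}" by auto
  also have "(\<Sum>j\<in>insert 0 {1..N}. of_nat (N choose j) * (of_nat p * d) ^ j * y ^ (N - j)) =
      y ^ N + (\<Sum>j\<in>{1..N}. of_nat (N choose j) * (of_nat p * d) ^ j * y ^ (N - j))"
    by (simp add: sum.insert)
  also have "(\<Sum>j\<in>{1..N}. of_nat (N choose j) * (of_nat p * d) ^ j * y ^ (N - j)) =
      of_nat p ^ (vp p N + 1) * (\<Sum>j\<in>{1..N}. smult (rho j) (d ^ j * B (N - j)))"
    unfolding sum_distrib_left by (rule sum.cong[OF refl]) (rule trm)
  finally show ?thesis using rho_pint B(1) d
    by (intro bexI[of _ "\<Sum>j\<in>{1..N}. smult (rho j) (d ^ j * B (N - j))"])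
       (auto intro!: A0_sum A0_smult A0_mult A0_power)
qed

end

context pset
begin

lemma X_A0: "monom 1 k \<in> A0" by (intro A0_R R_monom) (simp add: prime_p)

lemma main_decomp:
  assumes a1: "a \<ge> 1"
  shows "\<exists>B\<in>A0. (1 - monom 1 1) ^ (p * n + s) =
     (1 - monom 1 1) ^ s * (1 - monom 1 p) ^ n + of_nat p ^ (vp p (n div p ^ (a - 1)) + 1) * B"
proof -
  define X :: "rat poly" where "X = monom 1 1"
  define q where "q = p ^ (a - 1)"
  define N where "N = n div q"
  define n0 where "n0 = n mod q"
  define P :: "rat poly" where "P = of_nat p"
  have nq: "n = n0 + q * N" unfolding N_def n0_def by simp
  have Xp: "X ^ p = monom 1 p" unfolding X_def by (simp add: monom_power)
  obtain H where H: "H \<in> A0" "(1 - X) ^ p = 1 - X ^ p + P * H"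
    using one_minus_pow[OF X_A0[of 1], of 1] unfolding X_def P_def by auto
  define y1 where "y1 = 1 - X ^ p"
  have y1A: "y1 \<in> A0" unfolding y1_def Xp by (intro A0_diff A0_one X_A0)
  obtain G1 where G1: "G1 \<in> A0" "((1 - X) ^ p) ^ n0 = y1 ^ n0 + P * G1"
    using A0_lin_pow[OF y1A H(1), of n0] H(2) unfolding y1_def P_def by auto
  obtain d where d: "d \<in> A0" "((1 - X) ^ p) ^ q = y1 ^ q + P * d"
    using A0_lin_pow[OF y1A H(1), of q] H(2) unfolding y1_def P_def by auto
  define y where "y = y1 ^ q"
  have yJ: "y \<in> J"
  proof -
    obtain G where G: "G \<in> A0" "(1 - monom 1 p) ^ (p ^ (a - 1)) = 1 - (monom 1 p) ^ (p ^ (a - 1)) + P * G"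
      using one_minus_pow[OF X_A0[of p], of "a - 1"] unfolding P_def by auto
    have "(monom 1 p :: rat poly) ^ (p ^ (a - 1)) = monom 1 (p * p ^ (a - 1))" by (simp add: monom_power)
    also have "p * p ^ (a - 1) = Q" using a1 by (metis Suc_diff_le diff_Suc_1 power_Suc)
    finally have "y = - u + P * G" unfolding y_def y1_def q_def Xp u_def using G(2) by simp
    thus ?thesis using J_uminus[OF J_u] J.jp[OF G(1)] unfolding P_def by (metis J.jadd)
  qed
  obtain b where b: "b \<in> A0" "(y + P * d) ^ N = y ^ N + P ^ (vp p N + 1) * b"
    using J_binom[OF yJ d(1), of N] unfolding P_def by auto
  obtain b2 where b2: "b2 \<in> A0" "y ^ N = P ^ vp p N * b2"
    using J_pow[OF yJ, of N] unfolding P_def by auto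
  have "(1 - X) ^ (p * n + s) = (1 - X) ^ s * ((1 - X) ^ p) ^ n0 * (((1 - X) ^ p) ^ q) ^ N"
  proof -
    have c: "(((1 - X) ^ p) ^ N) ^ q = (((1 - X) ^ p) ^ q) ^ N"
      by (metis power_mult mult.commute)
    show ?thesis unfolding nq by (simp add: power_add power_mult mult_ac c)
  qed
  also have "\<dots> = (1 - X) ^ s * (y1 ^ n0 + P * G1) * (y ^ N + P ^ (vp p N + 1) * b)"
    unfolding G1(2) d(2) y_def[symmetric] b(2) ..
  also have "\<dots> = (1 - X) ^ s * (y1 ^ n0 * y ^ N) + P ^ (vp p N + 1) * ((1 - X) ^ s * (y1 ^ n0 * b + G1 * b2 + P * G1 * b))"
    using b2(2) by (simp add: algebra_simps)
  also have "y1 ^ n0 * y ^ N = (1 - X ^ p) ^ n" unfolding y_def y1_def nq by (simp add: power_add power_mult)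
  finally have "(1 - X) ^ (p * n + s) = (1 - X) ^ s * (1 - X ^ p) ^ n + P ^ (vp p N + 1) * ((1 - X) ^ s * (y1 ^ n0 * b + G1 * b2 + P * G1 * b))" .
  moreover have "(1 - X) ^ s * (y1 ^ n0 * b + G1 * b2 + P * G1 * b) \<in> A0"
    using b b2 G1 y1A unfolding X_def P_def by (intro A0_mult A0.add A0_power A0_diff A0_one X_A0 A0_of_nat)
  ultimately show ?thesis unfolding X_def Xp[unfolded X_def] P_def N_def q_def by blast
qed

end

definition Dsum :: "nat \<Rightarrow> nat \<Rightarrow> int \<Rightarrow> int" where
  "Dsum i l c = (\<Sum>h\<le>i. int (i choose h) * (-1) ^ (i - h) * (c + int h) ^ l)"

lemma Dsum_0: "Dsum i 0 c = 0 ^ i"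
proof -
  have "(1 + (-1::int)) ^ i = (\<Sum>h\<le>i. of_nat (i choose h) * 1 ^ h * (-1) ^ (i - h))"
    by (rule binomial_ring)
  thus ?thesis by (simp add: Dsum_def)
qed

lemma Dsum_Suc:
  "Dsum (Suc j) (Suc l) c = c * Dsum (Suc j) l c + int (Suc j) * Dsum j l (c + 1)"
proof -
  have "Dsum (Suc j) (Suc l) c =
      (\<Sum>h\<le>Suc j. c * (int (Suc j choose h) * (-1) ^ (Suc j - h) * (c + int h) ^ l)) +
      (\<Sum>h\<le>Suc j. int h * int (Suc j choose h) * (-1) ^ (Suc j - h) * (c + int h) ^ l)"
    unfolding Dsum_def by (simp add: sum.distrib[symmetric] algebra_simps)
  also have "(\<Sum>h\<le>Suc j. c * (int (Suc j choose h) * (-1) ^ (Suc j - h) * (c + int h) ^ l)) = c * Dsum (Suc j) l c"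
    unfolding Dsum_def by (simp only: sum_distrib_left)
  also have "(\<Sum>h\<le>Suc j. int h * int (Suc j choose h) * (-1) ^ (Suc j - h) * (c + int h) ^ l)
      = (\<Sum>h\<le>j. int (Suc h) * int (Suc j choose Suc h) * (-1) ^ (Suc j - Suc h) * (c + int (Suc h)) ^ l)"
    by (subst sum.atMost_Suc_shift) simp
  also have "\<dots> = (\<Sum>h\<le>j. int (Suc j) * (int (j choose h) * (-1) ^ (j - h) * ((c + 1) + int h) ^ l))"
  proof (rule sum.cong[OF refl])
    fix h
    have "int (Suc h) * int (Suc j choose Suc h) = int (Suc j) * int (j choose h)"
      using Suc_times_binomial[of h j] by (metis of_nat_mult)
    thus "int (Suc h) * int (Suc j choose Suc h) * (-1) ^ (Suc j - Suc h) * (c + int (Suc h)) ^ l =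
        int (Suc j) * (int (j choose h) * (-1) ^ (j - h) * ((c + 1) + int h) ^ l)"
      by (simp add: algebra_simps)
  qed
  also have "\<dots> = int (Suc j) * Dsum j l (c + 1)" unfolding Dsum_def by (simp add: sum_distrib_left)
  finally show ?thesis .
qed

lemma Dsum_prop: "fact i dvd Dsum i l c \<and> (l < i \<longrightarrow> Dsum i l c = 0)"
proof (induction l arbitrary: i c)
  case 0 thus ?case by (cases i) (simp_all add: Dsum_0)
next
  case (Suc l)
  show ?case
  proof (cases i)
    case 0 thus ?thesis by simp
  next
    case (Suc j)
    have d1: "fact (Suc j) dvd c * Dsum (Suc j) l c" using Suc.IH[of "Suc j" c] by simp
    have "fact j dvd Dsum j l (c + 1)" using Suc.IH[of j "c+1"] by simp
    hence d2: "fact (Suc j) dvd int (Suc j) * Dsum j l (c + 1)"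
      by (simp add: fact_Suc mult_dvd_mono)
    have z: "Suc l < Suc j \<Longrightarrow> Dsum (Suc j) (Suc l) c = 0"
      using Suc.IH[of "Suc j" c] Suc.IH[of j "c+1"] by (simp add: Dsum_Suc)
    show ?thesis using d1 d2 z Suc by (simp add: Dsum_Suc)
  qed
qed

context pset
begin

definition phi :: "int \<Rightarrow> nat \<Rightarrow> nat \<Rightarrow> rat" where
  "phi r l K = (if [int K = r] (mod int M) then (of_int (int K - r) / of_nat Q) ^ l else 0)"

definition Lf :: "int \<Rightarrow> nat \<Rightarrow> rat poly \<Rightarrow> rat" where
  "Lf r l P = (\<Sum>K\<le>degree P. coeff P K * phi r l K)"

lemma Lf_bound: "degree P < B \<Longrightarrow> Lf r l P = (\<Sum>K<B. coeff P K * phi r l K)"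
  unfolding Lf_def
  by (rule sum.mono_neutral_left) (auto simp: coeff_eq_0)

lemma Lf_add: "Lf r l (P + P') = Lf r l P + Lf r l P'"
proof -
  define B where "B = Suc (max (degree P) (degree P'))"
  have "degree (P + P') < B" unfolding B_def using degree_add_le_max[of P P'] by simp
  moreover have "degree P < B" "degree P' < B" unfolding B_def by auto
  ultimately show ?thesis by (simp add: Lf_bound[of _ B] sum.distrib algebra_simps)
qed

lemma Lf_smult: "Lf r l (smult c P) = c * Lf r l P"
proof -
  have d: "degree (smult c P) < Suc (degree P)" using degree_smult_le[of c P] by simp
  have "Lf r l (smult c P) = (\<Sum>K<Suc (degree P). coeff (smult c P) K * phi r l K)"
    by (rule Lf_bound[OF d])
  also have "\<dots> = c * (\<Sum>K<Suc (degree P). coeff P K * phi r l K)"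
    by (simp only: coeff_smult sum_distrib_left mult.assoc)
  also have "\<dots> = c * Lf r l P" by (subst Lf_bound[of P "Suc (degree P)"]) simp_all
  finally show ?thesis .
qed

lemma Lf_zero: "Lf r l 0 = 0" by (simp add: Lf_def)

lemma Lf_sum: "Lf r l (\<Sum>i\<in>S. f i) = (\<Sum>i\<in>S. Lf r l (f i))"
  by (induction S rule: infinite_finite_induct) (simp_all add: Lf_zero Lf_add)

lemma Lf_monom: "Lf r l (monom c K) = c * phi r l K"
proof -
  have "degree (monom c K) < Suc K" by (simp add: degree_monom_le le_less_trans[OF degree_monom_le])
  hence "Lf r l (monom c K) = (\<Sum>K'<Suc K. coeff (monom c K) K' * phi r l K')" by (rule Lf_bound)
  also have "\<dots> = c * phi r l K" by (simp add: coeff_monom sum.If_cases)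
  finally show ?thesis .
qed

lemma Lf_pow_mult: "Lf r l (of_nat n ^ e * P) = of_nat n ^ e * Lf r l P"
  by (simp add: of_nat_pow_mult Lf_smult)

end

context pset
begin

lemma neg1_pow_poly: "(-1 :: rat poly) ^ k = smult ((-1) ^ k) 1"
  by (induction k) auto

lemma binom_z: "z ^ i = (\<Sum>h\<le>i. monom (of_nat (i choose h) * (-1) ^ (i - h)) (M * h))"
proof -
  have "z ^ i = (monom 1 M + (-1)) ^ i" unfolding z_def by simp
  also have "\<dots> = (\<Sum>h\<le>i. of_nat (i choose h) * (monom 1 M) ^ h * (-1) ^ (i - h))"
    by (rule binomial_ring)
  also have "\<dots> = (\<Sum>h\<le>i. monom (of_nat (i choose h) * (-1) ^ (i - h)) (M * h))"
    by (rule sum.cong[OF refl]) (simp add: monom_power neg1_pow_poly of_nat_mult_conv_smult smult_monom mult.commute)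
  finally show ?thesis .
qed

lemma phi_shift:
  "phi r l (d + M * h) = (if [int d = r] (mod int M) then
      of_nat p ^ l * (of_int ((int d - r) div int M) + of_nat h) ^ l else 0)"
proof -
  have c: "[int (d + M * h) = r] (mod int M) \<longleftrightarrow> [int d = r] (mod int M)"
    by (simp add: cong_def)
  show ?thesis
  proof (cases "[int d = r] (mod int M)")
    case True
    then obtain c0 where c0: "int d - r = int M * c0"
      by (metis cong_iff_dvd_diff dvd_def)
    hence c0': "(int d - r) div int M = c0" using p_pos by simp
    have "int (d + M * h) - r = int M * (c0 + int h)" using c0 by (simp add: algebra_simps)
    hence "(of_int (int (d + M * h) - r) / of_nat Q :: rat) = of_nat p * (of_int c0 + of_nat h)"
      using p_pos by (simp add: field_simps)
    thus ?thesis unfolding phi_def using True c c0' by (simp add: power_mult_distrib)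
  next
    case False thus ?thesis unfolding phi_def using c by simp
  qed
qed

lemma Lf_monom_gam:
  "Lf r l (monom 1 d * gam i) = (if [int d = r] (mod int M) then
      of_nat p ^ l * of_int (Dsum i l ((int d - r) div int M)) / (of_nat p ^ i * fact i) else 0)"
proof -
  have "monom 1 d * gam i = smult (1 / (of_nat (p ^ i) * fact i))
      (\<Sum>h\<le>i. monom (of_nat (i choose h) * (-1) ^ (i - h)) (d + M * h))"
    unfolding gam_def binom_z by (simp add: sum_distrib_left mult_monom)
  hence "Lf r l (monom 1 d * gam i) = (1 / (of_nat (p ^ i) * fact i)) *
      (\<Sum>h\<le>i. of_nat (i choose h) * (-1) ^ (i - h) * phi r l (d + M * h))"
    by (simp add: Lf_smult Lf_sum Lf_monom)
  also have "\<dots> = (if [int d = r] (mod int M) then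
      of_nat p ^ l * of_int (Dsum i l ((int d - r) div int M)) / (of_nat p ^ i * fact i) else 0)"
    unfolding phi_shift Dsum_def
    by (auto simp: sum_distrib_left sum_divide_distrib field_simps)
  finally show ?thesis .
qed

lemma Lf_monom_gam_pint: "pint p (Lf r l (monom 1 d * gam i))"
proof (cases "i \<le> l")
  case True
  obtain k where k: "Dsum i l ((int d - r) div int M) = fact i * k"
    using Dsum_prop[of i l] by (meson dvdE)
  have "(of_nat p ^ l * of_int (Dsum i l ((int d - r) div int M)) / (of_nat p ^ i * fact i) :: rat)
      = of_int (int (p ^ (l - i)) * k)"
    using True p_pos unfolding k by (simp add: field_simps power_add[symmetric])
  thus ?thesis unfolding Lf_monom_gam
    by (simp add: pint_mult[OF prime_p] pint_power[OF prime_p] prime_p)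
next
  case False
  hence "Dsum i l ((int d - r) div int M) = 0" using Dsum_prop[of i l] by simp
  thus ?thesis unfolding Lf_monom_gam using prime_p by simp
qed

lemma Lf_A0: "P \<in> A0 \<Longrightarrow> pint p (Lf r l P)"
proof (induction rule: A0.induct)
  case (gen c i)
  have "c * gam i = (\<Sum>d\<le>degree c. monom (coeff c d) d) * gam i"
    by (simp only: poly_as_sum_of_monoms)
  also have "\<dots> = (\<Sum>d\<le>degree c. smult (coeff c d) (monom 1 d * gam i))"
    unfolding sum_distrib_right
    by (rule sum.cong[OF refl]) (metis mult.right_neutral mult_smult_left smult_monom)
  finally have "Lf r l (c * gam i) = (\<Sum>d\<le>degree c. coeff c d * Lf r l (monom 1 d * gam i))"
    by (simp add: Lf_sum Lf_smult)
  moreover have "pint p (\<Sum>d\<le>degree c. coeff c d * Lf r l (monom 1 d * gam i))"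
    using gen unfolding R_def
    by (intro pint_sum[OF prime_p] pint_mult[OF prime_p] Lf_monom_gam_pint) auto
  ultimately show ?case by simp
next
  case (add x y) thus ?case by (simp add: Lf_add pint_add[OF prime_p])
qed

end

lemma ibinom_nat: "ibinom (int A) (int B) = int (A choose B)"
  unfolding ibinom_def by auto

lemma class_sum_nat:
  assumes "\<And>k. f k \<noteq> 0 \<Longrightarrow> 0 \<le> k \<and> k \<le> int n"
  shows "class_sum f r m = (\<Sum>k\<le>n. if [int k = r] (mod m) then f (int k) else 0)"
proof -
  define T where "T = int ` {k \<in> {..n}. [int k = r] (mod m)}"
  have "(\<Sum>k\<le>n. if [int k = r] (mod m) then f (int k) else 0) = (\<Sum>k\<in>{k \<in> {..n}. [int k = r] (mod m)}. f (int k))"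
    by (rule sum.inter_filter[symmetric]) simp
  also have "\<dots> = sum f T" unfolding T_def by (subst sum.reindex) (auto simp: inj_on_def)
  also have "sum f T = sum f {k. [k = r] (mod m) \<and> f k \<noteq> 0}"
  proof (rule sum.mono_neutral_right)
    show "finite T" unfolding T_def by simp
    show "{k. [k = r] (mod m) \<and> f k \<noteq> 0} \<subseteq> T"
    proof
      fix k assume k: "k \<in> {k. [k = r] (mod m) \<and> f k \<noteq> 0}"
      hence "0 \<le> k" "k \<le> int n" using assms by auto
      hence "k = int (nat k)" "nat k \<in> {..n}" by auto
      thus "k \<in> T" unfolding T_def using k by (metis (mono_tags, lifting) image_eqI mem_Collect_eq)
    qed
    show "\<forall>i\<in>T - {k. [k = r] (mod m) \<and> f k \<noteq> 0}. f i = 0" unfolding T_def by auto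
  qed
  finally show ?thesis unfolding class_sum_def by simp
qed

lemma pow_expand:
  "(1 - monom 1 e :: rat poly) ^ N = (\<Sum>K\<le>N. monom (of_nat (N choose K) * (-1) ^ K) (e * K))"
proof -
  have "(1 - monom 1 e :: rat poly) ^ N = (- monom 1 e + 1) ^ N" by simp
  also have "\<dots> = (\<Sum>K\<le>N. of_nat (N choose K) * (- monom 1 e) ^ K * 1 ^ (N - K))"
    by (rule binomial_ring)
  also have "\<dots> = (\<Sum>K\<le>N. monom (of_nat (N choose K) * (-1) ^ K) (e * K))"
  proof (rule sum.cong[OF refl])
    fix K
    have nk: "(- monom 1 e :: rat poly) ^ K = smult ((-1) ^ K) (monom 1 (e * K))"
      by (induction K) (auto simp: mult_monom algebra_simps)
    have "of_nat (N choose K) * (- monom 1 e) ^ K * 1 ^ (N - K) = of_nat (N choose K) * (- monom 1 e :: rat poly) ^ K"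
      by simp
    also have "\<dots> = of_nat (N choose K) * smult ((-1) ^ K) (monom 1 (e * K))" by (subst nk) (rule refl)
    also have "\<dots> = monom (of_nat (N choose K) * (-1) ^ K) (e * K)"
      by (simp add: of_nat_mult_conv_smult smult_monom)
    finally show "of_nat (N choose K) * (- monom 1 e) ^ K * 1 ^ (N - K) = monom (of_nat (N choose K) * (-1) ^ K :: rat) (e * K)" .
  qed
  finally show ?thesis .
qed

context pset
begin

lemma Lf_pow1:
  "Lf r l ((1 - monom 1 1) ^ N) = (\<Sum>K\<le>N. of_nat (N choose K) * (-1) ^ K * phi r l K)"
  unfolding pow_expand by (simp add: Lf_sum Lf_monom)

lemma Lf_prod:
  "Lf r l ((1 - monom 1 1) ^ s * (1 - monom 1 p) ^ n) =
    (\<Sum>\<sigma>\<le>s. \<Sum>k\<le>n. of_nat (s choose \<sigma>) * (-1) ^ \<sigma> * (of_nat (n choose k) * (-1) ^ k) * phi r l (\<sigma> + p * k))"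
proof -
  have "(1 - monom 1 1) ^ s * (1 - monom 1 p) ^ n =
      (\<Sum>\<sigma>\<le>s. \<Sum>k\<le>n. monom (of_nat (s choose \<sigma>) * (-1) ^ \<sigma> :: rat) (1 * \<sigma>) * monom (of_nat (n choose k) * (-1) ^ k :: rat) (p * k))"
    unfolding pow_expand by (rule sum_product)
  also have "\<dots> = (\<Sum>\<sigma>\<le>s. \<Sum>k\<le>n. monom (of_nat (s choose \<sigma>) * (-1) ^ \<sigma> * (of_nat (n choose k) * (-1) ^ k) :: rat) (\<sigma> + p * k))"
    by (simp only: mult_monom mult_1)
  finally show ?thesis by (simp only: Lf_sum Lf_monom)
qed

lemma phi_nz:
  assumes "phi (int p * r0 + t) l K \<noteq> 0"
  shows "int K mod int p = t mod int p"
proof -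
  have "[int K = int p * r0 + t] (mod int M)" using assms unfolding phi_def by (auto split: if_splits)
  hence "[int K = int p * r0 + t] (mod int p)" by (rule cong_dvd_modulus) simp
  hence "int K mod int p = (int p * r0 + t) mod int p" by (simp only: cong_def)
  thus ?thesis by simp
qed

lemma phi_pk:
  assumes a1: "a \<ge> 1"
  shows "phi (int p * r0 + int t) l (t + p * k) =
    (if [int k = r0] (mod int (p ^ a)) then (of_int (int k - r0) / of_nat (p ^ (a - 1))) ^ l else 0)"
proof -
  have c: "[int (t + p * k) = int p * r0 + int t] (mod int M) \<longleftrightarrow> [int k = r0] (mod int (p ^ a))"
  proof -
    have e1: "int (t + p * k) - (int p * r0 + int t) = int p * (int k - r0)" by (simp add: algebra_simps)
    have e2: "int M = int p * int (p ^ a)" by simp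
    have e3: "int p * int (p ^ a) dvd int p * (int k - r0) \<longleftrightarrow> int (p ^ a) dvd (int k - r0)"
      using p_pos by (intro dvd_times_left_cancel_iff) simp
    show ?thesis unfolding cong_iff_dvd_diff e1 e2 e3 ..
  qed
  have pa: "(of_nat (p ^ a) :: rat) = of_nat p * of_nat (p ^ (a - 1))"
    using a1 by (metis Suc_diff_le diff_Suc_1 of_nat_mult power_Suc)
  have "(of_int (int (t + p * k) - (int p * r0 + int t)) / of_nat Q :: rat) = of_int (int k - r0) / of_nat (p ^ (a - 1))"
  proof -
    have "int (t + p * k) - (int p * r0 + int t) = int p * (int k - r0)" by (simp add: algebra_simps)
    hence "(of_int (int (t + p * k) - (int p * r0 + int t)) :: rat) = of_nat p * of_int (int k - r0)" by simp
    thus ?thesis using p_pos unfolding pa by simp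
  qed
  thus ?thesis unfolding phi_def c by simp
qed

end

lemma ibinom_nat2: "ibinom (int A + int B) (int C + int D) = int ((A + B) choose (C + D))"
  using ibinom_nat[of "A + B" "C + D"] by simp

lemma k_bounds:
  fixes k :: int
  assumes "p > 0" "0 \<le> int p * k + int t'" "int p * k + int t' \<le> int p * int n + int s'" "t' < p" "s' < p"
  shows "0 \<le> k \<and> k \<le> int n"
proof
  show "0 \<le> k"
  proof (rule ccontr)
    assume "\<not> 0 \<le> k"
    hence "k \<le> -1" by simp
    hence "int p * k \<le> int p * (-1)" by (intro mult_left_mono) simp_all
    thus False using assms by simp
  qed
  show "k \<le> int n"
  proof (rule ccontr)
    assume "\<not> k \<le> int n"
    hence "int n + 1 \<le> k" by simp
    hence "int p * (int n + 1) \<le> int p * k" by (intro mult_left_mono) simp_all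
    thus False using assms by (simp add: algebra_simps)
  qed
qed

context pset
begin

lemma block_sum:
  assumes "t' < p" and z: "\<And>K. K mod p \<noteq> t' \<Longrightarrow> g K = 0"
  shows "(\<Sum>K<Suc n * p. g K) = (\<Sum>k\<le>n. g (k * p + t'))"
proof -
  have "(\<Sum>K<Suc n * p. g K) = (\<Sum>k<Suc n. \<Sum>K\<in>{k * p..<k * p + p}. g K)"
    by (rule sum.nat_group[symmetric])
  also have "\<dots> = (\<Sum>k<Suc n. g (k * p + t'))"
  proof (rule sum.cong[OF refl])
    fix k
    have "(\<Sum>K\<in>{k * p..<k * p + p}. g K) = (\<Sum>K\<in>{k * p + t'}. g K)"
    proof (rule sum.mono_neutral_right)
      show "{k * p + t'} \<subseteq> {k * p..<k * p + p}" using assms(1) by auto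
      show "\<forall>K\<in>{k * p..<k * p + p} - {k * p + t'}. g K = 0"
      proof
        fix K assume K: "K \<in> {k * p..<k * p + p} - {k * p + t'}"
        then obtain \<tau> where "K = k * p + \<tau>" "\<tau> < p" "\<tau> \<noteq> t'"
          by (metis Diff_iff atLeastLessThan_iff le_Suc_ex nat_add_left_cancel_less singletonI)
        hence "K mod p \<noteq> t'" by simp
        thus "g K = 0" by (rule z)
      qed
    qed simp
    thus "(\<Sum>K\<in>{k * p..<k * p + p}. g K) = g (k * p + t')" by simp
  qed
  finally show ?thesis by (simp add: lessThan_Suc_atMost)
qed

lemma G1:
  assumes a1: "a \<ge> 1" and t: "t' < p" and s: "s' < p"
  shows "(\<Sum>K\<le>p * n + s'. of_nat ((p * n + s') choose K) * (-1) ^ K * phi (int p * r + int t') l K) =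
    (-1) ^ t' * class_sum (\<lambda>k. of_int (ibinom (int p * int n + int s') (int p * k + int t')) * (-1) powi (int p * k)
                    * (of_int (k - r) / of_int (int p ^ (a - 1))) ^ l) r (int p ^ a)"
    (is "?L = _ * class_sum ?f _ _")
proof -
  define g where "g K = of_nat ((p * n + s') choose K) * (-1) ^ K * phi (int p * r + int t') l K" for K
  have "?L = (\<Sum>K<Suc n * p. g K)"
    unfolding g_def
  proof (rule sum.mono_neutral_cong_left)
    show "{..p * n + s'} \<subseteq> {..<Suc n * p}" using s by (auto simp: algebra_simps)
  qed auto
  also have "\<dots> = (\<Sum>k\<le>n. g (k * p + t'))"
  proof (rule block_sum[OF t])
    fix K assume "K mod p \<noteq> t'"
    hence "int K mod int p \<noteq> int t' mod int p" using t by (metis mod_less of_nat_eq_iff zmod_int)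
    thus "g K = 0" unfolding g_def using phi_nz[of r "int t'" l K] by auto
  qed
  also have "\<dots> = (\<Sum>k\<le>n. (-1) ^ t' * (if [int k = r] (mod int p ^ a) then ?f (int k) else 0))"
  proof (rule sum.cong[OF refl])
    fix k
    have ph: "phi (int p * r + int t') l (k * p + t') = phi (int p * r + int t') l (t' + p * k)"
      by (simp add: mult.commute add.commute)
    show "g (k * p + t') = (-1) ^ t' * (if [int k = r] (mod int p ^ a) then ?f (int k) else 0)"
      unfolding g_def ph phi_pk[OF a1]
      by (simp add: ibinom_nat2 power_add mult.commute
          flip: of_nat_mult power_mult)
  qed
  also have "\<dots> = (-1) ^ t' * class_sum ?f r (int p ^ a)"
  proof -
    have "class_sum ?f r (int p ^ a) = (\<Sum>k\<le>n. if [int k = r] (mod int p ^ a) then ?f (int k) else 0)"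
    proof (rule class_sum_nat)
      fix k assume "?f k \<noteq> 0"
      hence "ibinom (int p * int n + int s') (int p * k + int t') \<noteq> 0" by auto
      hence "0 \<le> int p * k + int t'" "int p * k + int t' \<le> int p * int n + int s'"
        unfolding ibinom_def by (auto split: if_splits)
      thus "0 \<le> k \<and> k \<le> int n" using k_bounds[OF p_pos _ _ t s] by blast
    qed
    thus ?thesis by (simp add: sum_distrib_left)
  qed
  finally show ?thesis .
qed

end

lemma sign_cancel: "(-1::rat) ^ t * x = (-1) ^ t * y + e * z \<Longrightarrow> x - y = e * ((-1) ^ t * z)"
  by (cases "even t") (auto simp: algebra_simps)

context pset
begin

lemma G2:
  assumes a1: "a \<ge> 1" and t: "t' < p" and s: "s' < p"
  shows "(\<Sum>\<sigma>\<le>s'. \<Sum>k\<le>n. of_nat (s' choose \<sigma>) * (-1) ^ \<sigma> * (of_nat (n choose k) * (-1) ^ k) * phi (int p * r + int t') l (\<sigma> + p * k)) =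
    (-1) ^ t' * class_sum (\<lambda>k. of_int (ibinom (int n) k) * of_int (ibinom (int s') (int t')) * (-1) powi k
                    * (of_int (k - r) / of_int (int p ^ (a - 1))) ^ l) r (int p ^ a)"
    (is "?L = _ * class_sum ?f _ _")
proof -
  define F where "F \<sigma> = (\<Sum>k\<le>n. of_nat (s' choose \<sigma>) * (-1) ^ \<sigma> * (of_nat (n choose k) * (-1) ^ k) * phi (int p * r + int t') l (\<sigma> + p * k))" for \<sigma>
  have "?L = (\<Sum>\<sigma>\<le>s'. F \<sigma>)" unfolding F_def by (rule refl)
  also have "\<dots> = (\<Sum>\<sigma>\<le>s'. if \<sigma> = t' then F t' else 0)"
  proof (rule sum.cong[OF refl])
    fix \<sigma> assume \<sigma>: "\<sigma> \<in> {..s'}"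
    show "F \<sigma> = (if \<sigma> = t' then F t' else 0)"
    proof (cases "\<sigma> = t'")
      case False
      have "phi (int p * r + int t') l (\<sigma> + p * k) = 0" for k
      proof (rule ccontr)
        assume "phi (int p * r + int t') l (\<sigma> + p * k) \<noteq> 0"
        from phi_nz[OF this] have "int (\<sigma> + p * k) mod int p = int t' mod int p" .
        moreover have "int (\<sigma> + p * k) mod int p = int \<sigma>" using \<sigma> s by (simp flip: of_nat_mod)
        moreover have "int t' mod int p = int t'" using t by simp
        ultimately show False using False by simp
      qed
      hence "F \<sigma> = 0" unfolding F_def by simp
      thus ?thesis using False by simp
    qed simp
  qed
  also have "\<dots> = (if t' \<le> s' then F t' else 0)" by simp
  also have "\<dots> = (-1) ^ t' * (\<Sum>k\<le>n. if [int k = r] (mod int p ^ a) then ?f (int k) else 0)"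
  proof (cases "t' \<le> s'")
    case True
    have "F t' = (\<Sum>k\<le>n. (-1) ^ t' * (if [int k = r] (mod int p ^ a) then ?f (int k) else 0))"
      unfolding F_def
    proof (rule sum.cong[OF refl])
      fix k assume "k \<in> {..n}"
      have fk: "?f (int k) = of_nat (n choose k) * of_nat (s' choose t') * (-1) ^ k * (of_int (int k - r) / of_nat (p ^ (a - 1))) ^ l"
        by (simp only: ibinom_nat power_int_of_nat of_int_of_nat_eq of_nat_power of_int_power)
      show "of_nat (s' choose t') * (-1) ^ t' * (of_nat (n choose k) * (-1) ^ k) * phi (int p * r + int t') l (t' + p * k) =
          (-1) ^ t' * (if [int k = r] (mod int p ^ a) then ?f (int k) else 0)"
      proof (cases "[int k = r] (mod int p ^ a)")
        case True
        have ph: "phi (int p * r + int t') l (t' + p * k) = (of_int (int k - r) / of_nat (p ^ (a - 1))) ^ l"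
          using True by (simp add: phi_pk[OF a1])
        show ?thesis unfolding ph fk if_P[OF True] by (simp only: mult_ac)
      next
        case False
        have ph: "phi (int p * r + int t') l (t' + p * k) = 0"
          using False by (simp add: phi_pk[OF a1])
        show ?thesis unfolding ph if_not_P[OF False] by simp
      qed
    qed
    thus ?thesis using True by (simp add: sum_distrib_left)
  next
    case False
    hence "s' choose t' = 0" by simp
    hence ib: "ibinom (int s') (int t') = 0" unfolding ibinom_nat by simp
    have "(\<Sum>k\<le>n. if [int k = r] (mod int p ^ a) then ?f (int k) else 0) = 0"
      by (rule sum.neutral) (simp add: ib)
    thus ?thesis using False by simp
  qed
  also have "(\<Sum>k\<le>n. if [int k = r] (mod int p ^ a) then ?f (int k) else 0) = class_sum ?f r (int p ^ a)"
  proof (rule class_sum_nat[symmetric])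
    fix k assume "?f k \<noteq> 0"
    hence "ibinom (int n) k \<noteq> 0" by auto
    thus "0 \<le> k \<and> k \<le> int n" unfolding ibinom_def by (auto split: if_splits)
  qed
  finally show ?thesis .
qed

lemma key:
  assumes a1: "a \<ge> 1" and t: "t' < p" and s: "s' < p"
  shows "\<exists>\<rho>. pint p \<rho> \<and>
    class_sum (\<lambda>k. of_int (ibinom (int p * int n + int s') (int p * k + int t')) * (-1) powi (int p * k)
                    * (of_int (k - r) / of_int (int p ^ (a - 1))) ^ l) r (int p ^ a) -
    class_sum (\<lambda>k. of_int (ibinom (int n) k) * of_int (ibinom (int s') (int t')) * (-1) powi k
                    * (of_int (k - r) / of_int (int p ^ (a - 1))) ^ l) r (int p ^ a)
    = of_nat p ^ (vp p (n div p ^ (a - 1)) + 1) * \<rho>"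
    (is "\<exists>\<rho>. _ \<and> ?SL - ?SR = ?e * \<rho>")
proof -
  obtain B where B: "B \<in> A0" "(1 - monom 1 1) ^ (p * n + s') =
     (1 - monom 1 1) ^ s' * (1 - monom 1 p) ^ n + of_nat p ^ (vp p (n div p ^ (a - 1)) + 1) * B"
    using main_decomp[OF a1, of n s'] by blast
  define r' where "r' = int p * r + int t'"
  have "Lf r' l ((1 - monom 1 1) ^ (p * n + s')) =
      Lf r' l ((1 - monom 1 1) ^ s' * (1 - monom 1 p) ^ n) + ?e * Lf r' l B"
    unfolding B(2) by (simp only: Lf_add Lf_pow_mult)
  hence "(-1) ^ t' * ?SL = (-1) ^ t' * ?SR + ?e * Lf r' l B"
    unfolding Lf_pow1 Lf_prod r'_def G1[OF a1 t s] G2[OF a1 t s] .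
  hence "?SL - ?SR = ?e * ((-1) ^ t' * Lf r' l B)" by (rule sign_cancel)
  moreover have "pint p ((-1) ^ t' * Lf r' l B)"
    using pint_of_int[OF prime_p, of "(-1) ^ t'"] Lf_A0[OF B(1)]
    by (intro pint_mult[OF prime_p]) simp_all
  ultimately show ?thesis by blast
qed

end

theorem theorem1p6:
  fixes p l n :: nat and r s t \<alpha> :: int
  assumes "prime p"
    and "0 \<le> s" "s < int p" "0 \<le> t" "t < int p"
    and "\<alpha> \<ge> 2"
  shows "qcong
    ((1 / of_nat (fact (n div p ^ (nat \<alpha> - 1)))) *
      class_sum (\<lambda>k. of_int (ibinom (int p * int n + s) (int p * k + t)) * (-1) powi (int p * k)
                    * (of_int (k - r) / of_int (int p ^ (nat \<alpha> - 1))) ^ l) r (int p ^ nat \<alpha>))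
    ((1 / of_nat (fact (n div p ^ (nat \<alpha> - 1)))) *
      class_sum (\<lambda>k. of_int (ibinom (int n) k) * of_int (ibinom s t) * (-1) powi k
                    * (of_int (k - r) / of_int (int p ^ (nat \<alpha> - 1))) ^ l) r (int p ^ nat \<alpha>))
    (int p)"
proof -
  interpret pset p "nat \<alpha>" using assms(1) by unfold_locales
  obtain s' where s': "s = int s'" using assms(2) by (metis nonneg_eq_int)
  obtain t' where t': "t = int t'" using assms(4) by (metis nonneg_eq_int)
  have a1: "nat \<alpha> \<ge> 1" using assms(6) by simp
  have sp: "s' < p" and tp: "t' < p" using assms(3,5) s' t' by simp_all
  define N where "N = n div p ^ (nat \<alpha> - 1)"
  obtain \<rho> where \<rho>: "pint p \<rho>"
    "class_sum (\<lambda>k. of_int (ibinom (int p * int n + s) (int p * k + t)) * (-1) powi (int p * k)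
                    * (of_int (k - r) / of_int (int p ^ (nat \<alpha> - 1))) ^ l) r (int p ^ nat \<alpha>) -
     class_sum (\<lambda>k. of_int (ibinom (int n) k) * of_int (ibinom s t) * (-1) powi k
                    * (of_int (k - r) / of_int (int p ^ (nat \<alpha> - 1))) ^ l) r (int p ^ nat \<alpha>)
    = of_nat p ^ (vp p N + 1) * \<rho>"
    using key[OF a1 tp sp, of n r l] unfolding s' t' N_def by blast
  obtain c where c: "fact N = p ^ vp p N * c" "\<not> p dvd c" using fact_vp[OF assms(1)] by blast
  have c0: "c > 0" using c(2) by (cases c) auto
  have nd: "\<not> int p dvd int c" using c(2) by simp
  have pint2: "pint p (\<rho> / of_int (int c))" by (rule pint_div[OF assms(1) \<rho>(1) nd])
  show ?thesis
    unfolding qcong_def N_def[symmetric] right_diff_distrib[symmetric] \<rho>(2)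
  proof -
    have "1 / of_nat (fact N) * (of_nat p ^ (vp p N + 1) * \<rho>) = of_nat p * (\<rho> / of_int (int c))"
      using c0 p_pos unfolding c(1) by (simp add: field_simps)
    thus "int p dvd fst (quotient_of (1 / of_nat (fact N) * (of_nat p ^ (vp p N + 1) * \<rho>)))"
      using qcong_of_pint[OF assms(1) pint2] by simp
  qed
qed

end
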